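(* For real $p\neq 0$, the inequality $\left( \frac{\sinh x}{x}\right) ^{2p}+\left( \frac{\tanh x}{x}\right) ^{p}>2$ holds for all $x\in(0,\infty)$ if and only if $p>0$ or $p\leq -3/5$. *)

theory Defs
  imports Complex_Main
begin

end

theory Submission
  imports Defs "HOL-Real_Asymp.Real_Asymp"
begin


definition ep :: "(int \<times> nat \<times> int) list \<Rightarrow> real \<Rightarrow> real" where
  "ep xs t = sum_list (map (\<lambda>(a,j,k). of_int a * t^j * exp (of_int k * t)) xs)"

definition epc :: "(int \<times> nat \<times> int) list \<Rightarrow> nat \<Rightarrow> real" where
  "epc xs n = sum_list (map (\<lambda>(a,j,k). if j \<le> n then of_int a * of_int k ^ (n-j) / fact (n-j) else 0) xs)"

fun ff :: "nat \<Rightarrow> nat \<Rightarrow> int" where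
  "ff n 0 = 1" | "ff n (Suc j) = int n * ff (n - 1) j"

definition epi :: "(int \<times> nat \<times> int) list \<Rightarrow> nat \<Rightarrow> int" where
  "epi xs n = sum_list (map (\<lambda>(a,j,k). if j \<le> n then a * k^(n-j) * ff n j else 0) xs)"

lemma single_sums:
  fixes a k t :: real
  shows "(\<lambda>n. (if j \<le> n then a * k ^ (n-j) / fact (n-j) else 0) * t^n) sums (a * t^j * exp (k * t))"
proof -
  have "(\<lambda>i. (k*t)^i /\<^sub>R fact i) sums exp (k*t)" by (rule exp_converges)
  hence "(\<lambda>i. (a * t^j) * ((k*t)^i /\<^sub>R fact i)) sums ((a*t^j) * exp (k*t))" by (rule sums_mult)
  hence "(\<lambda>i. (if j \<le> i + j then a * k ^ (i + j - j) / fact (i + j - j) else 0) * t^(i+j)) sums (a * t^j * exp (k * t))"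
    by (simp add: power_mult_distrib power_add field_simps real_scaleR_def)
  thus ?thesis by (subst (asm) sums_zero_iff_shift) auto
qed

lemma ep_sums: "(\<lambda>n. epc xs n * t^n) sums (ep xs t)"
proof (induction xs)
  case Nil
  then show ?case by (simp add: ep_def epc_def)
next
  case (Cons x xs)
  obtain a j k where x: "x = (a,j,k)" by (cases x) auto
  have "(\<lambda>n. (if j \<le> n then of_int a * of_int k ^ (n-j) / fact (n-j) else 0) * t^n + epc xs n * t^n)
        sums (of_int a * t^j * exp (of_int k * t) + ep xs t)"
    by (intro sums_add single_sums Cons)
  thus ?case by (simp add: x ep_def epc_def distrib_right)
qed

lemma ff_fact: "j \<le> n \<Longrightarrow> real_of_int (ff n j) * fact (n - j) = fact n"
proof (induction j arbitrary: n)
  case 0 then show ?case by simp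
next
  case (Suc j)
  then obtain m where n: "n = Suc m" by (cases n) auto
  have "real_of_int (ff m j) * fact (m - j) = fact m" using Suc n by simp
  then show ?case using Suc by (simp add: n fact_Suc)
qed

lemma epi_epc: "real_of_int (epi xs n) = fact n * epc xs n"
proof (induction xs)
  case Nil then show ?case by (simp add: epi_def epc_def)
next
  case (Cons x xs)
  obtain a j k where x: "x = (a,j,k)" by (cases x) auto
  have "j \<le> n \<Longrightarrow> real_of_int (a * k^(n-j) * ff n j) = fact n * (of_int a * of_int k ^ (n-j) / fact (n-j))"
    using ff_fact[of j n] by (simp add: field_simps)
  with Cons show ?case by (auto simp: x epi_def epc_def distrib_left)
qed

lemma ep_even_pos:
  assumes nn: "\<And>n. even n \<Longrightarrow> epi xs n \<ge> 0" and m: "even m" "epi xs m > 0" and t: "t \<noteq> 0"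
  shows "ep xs t + ep xs (-t) > 0"
proof -
  have s: "(\<lambda>n. epc xs n * t^n + epc xs n * (-t)^n) sums (ep xs t + ep xs (-t))"
    by (intro sums_add ep_sums)
  have c: "epc xs n \<ge> 0" if "even n" for n
  proof -
    have "0 \<le> fact n * epc xs n" using nn[OF that] epi_epc[of xs n] by simp
    moreover have "(0::real) < fact n" by (rule fact_gt_zero)
    ultimately show ?thesis by (simp add: zero_le_mult_iff)
  qed
  have c2: "epc xs m > 0"
  proof -
    have "0 < fact m * epc xs m" using m(2) epi_epc[of xs m] by simp
    moreover have "(0::real) < fact m" by (rule fact_gt_zero)
    ultimately show ?thesis by (simp add: zero_less_mult_iff)
  qed
  have f: "epc xs n * t^n + epc xs n * (-t)^n \<ge> 0" for n
  proof (cases "even n")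
    case True
    have "t^n \<ge> 0" using True by (simp add: zero_le_even_power)
    then show ?thesis using c[OF True] True by simp
  next
    case False then show ?thesis by simp
  qed
  have "t^m > 0" using m(1) t by (simp add: zero_less_power_eq)
  hence fm: "0 < epc xs m * t^m + epc xs m * (-t)^m" using c2 m(1) by simp
  have "0 < suminf (\<lambda>n. epc xs n * t^n + epc xs n * (-t)^n)"
    by (rule suminf_pos2[where i=m, OF sums_summable[OF s] f fm])
  thus ?thesis using s by (simp add: sums_iff)
qed

lemma epi_append: "epi (xs @ ys) n = epi xs n + epi ys n"
  by (simp add: epi_def)

lemma ff_bounds: "0 \<le> ff n j \<and> ff n j \<le> int n ^ j"
proof (induction j arbitrary: n)
  case 0 then show ?case by simp
next
  case (Suc j)
  have "ff (n-1) j \<le> int (n-1)^j" "0 \<le> ff (n-1) j" using Suc by auto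
  moreover have "int (n-1)^j \<le> int n ^ j" by (intro power_mono) auto
  ultimately show ?case by (auto intro!: mult_mono)
qed

lemma abs_epi_le: "\<bar>epi ys n\<bar> \<le> sum_list (map (\<lambda>(a,j,k). \<bar>a\<bar> * \<bar>k\<bar>^(n-j) * int n^j) ys)"
proof (induction ys)
  case Nil then show ?case by (simp add: epi_def)
next
  case (Cons x ys)
  obtain a j k where x: "x = (a,j,k)" by (cases x) auto
  have "\<bar>(if j \<le> n then a * k^(n-j) * ff n j else 0)\<bar> \<le> \<bar>a\<bar> * \<bar>k\<bar>^(n-j) * int n^j"
    using ff_bounds[of n j] by (auto simp: abs_mult power_abs intro!: mult_left_mono)
  hence "\<bar>epi (x#ys) n\<bar> \<le> \<bar>a\<bar> * \<bar>k\<bar>^(n-j) * int n^j + \<bar>epi ys n\<bar>"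
  proof -
    have "epi (x#ys) n = (if j \<le> n then a * k^(n-j) * ff n j else 0) + epi ys n" by (simp add: x epi_def)
    thus ?thesis using abs_triangle_ineq[of "(if j \<le> n then a * k^(n-j) * ff n j else 0)" "epi ys n"] \<open>\<bar>(if j \<le> n then a * k^(n-j) * ff n j else 0)\<bar> \<le> _\<close> by linarith
  qed
  moreover have "sum_list (map (\<lambda>(a,j,k). \<bar>a\<bar> * \<bar>k\<bar>^(n-j) * int n^j) (x#ys)) = \<bar>a\<bar> * \<bar>k\<bar>^(n-j) * int n^j + sum_list (map (\<lambda>(a,j,k). \<bar>a\<bar> * \<bar>k\<bar>^(n-j) * int n^j) ys)"
    by (simp add: x)
  ultimately show ?case using Cons.IH by linarith
qed

lemma growth:
  fixes k B :: int
  assumes jN: "j \<le> N" and N: "N > 0" and c: "(int N + 1)^j * \<bar>k\<bar> \<le> B * int N^j" and nN: "N \<le> n"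
  shows "\<bar>k\<bar>^(n-j) * int n^j * B^N \<le> \<bar>k\<bar>^(N-j) * int N^j * B^n"
  using nN
proof (induction n rule: dec_induct)
  case base then show ?case by (simp add: mult_ac)
next
  case (step n)
  have "(int n + 1) * int N \<le> int n * (int N + 1)" using step(1) by (simp add: algebra_simps)
  hence "((int n + 1) * int N)^j \<le> (int n * (int N + 1))^j" by (intro power_mono) auto
  hence A: "(int n + 1)^j * int N^j * \<bar>k\<bar> \<le> int n^j * (int N + 1)^j * \<bar>k\<bar>"
    by (simp add: power_mult_distrib mult_right_mono)
  also have "\<dots> \<le> int n^j * (B * int N^j)" using c
    by (metis mult.assoc mult_left_mono zero_le_power of_nat_0_le_iff)
  finally have "((int n + 1)^j * \<bar>k\<bar>) * int N^j \<le> (int n^j * B) * int N^j" by (simp add: mult_ac)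
  hence key: "(int n + 1)^j * \<bar>k\<bar> \<le> int n^j * B" using N
    by (metis mult_le_cancel_right zero_less_power of_nat_0_less_iff not_le)
  have "0 \<le> B * int N^j" using c by (rule order_trans[rotated]) simp
  moreover have "int N^j > 0" using N by simp
  ultimately have Bnn: "B \<ge> 0" by (simp add: zero_le_mult_iff)
  have "\<bar>k\<bar>^(Suc n - j) * int (Suc n)^j * B^N = \<bar>k\<bar>^(n-j) * B^N * ((int n + 1)^j * \<bar>k\<bar>)"
  proof -
    have "Suc n - j = Suc (n-j)" using jN step(1) by simp
    thus ?thesis by (simp add: mult_ac add.commute)
  qed
  also have "\<dots> \<le> \<bar>k\<bar>^(n-j) * B^N * (int n^j * B)"
    using key Bnn by (intro mult_left_mono) auto
  also have "\<dots> = B * (\<bar>k\<bar>^(n-j) * int n^j * B^N)" by (simp add: mult_ac)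
  also have "\<dots> \<le> B * (\<bar>k\<bar>^(N-j) * int N^j * B^n)"
    using step.IH Bnn by (intro mult_left_mono) auto
  finally show ?case by (simp add: mult_ac)
qed

lemma sum_list_mono_int:
  "(\<And>x. x \<in> set xs \<Longrightarrow> f x \<le> g x) \<Longrightarrow> sum_list (map f xs) \<le> (sum_list (map g xs) :: int)"
  by (induction xs) (auto intro: add_mono)

lemma sl_mult: "sum_list (map f xs) * (c::int) = sum_list (map (\<lambda>x. f x * c) xs)"
  by (induction xs) (auto simp: algebra_simps)

lemma epi_asym:
  fixes B :: int
  assumes conds: "\<forall>(a,j,k)\<in>set ys. j \<le> N \<and> (int N + 1)^j * \<bar>k\<bar> \<le> B * int N^j"
    and S: "sum_list (map (\<lambda>(a,j,k). \<bar>a\<bar> * \<bar>k\<bar>^(N-j) * int N^j) ys) \<le> B^N"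
    and N: "N > 0" and B: "B > 0" and nN: "N \<le> n" and main: "epi xs n \<ge> B^n"
  shows "epi (xs @ ys) n \<ge> 0"
proof -
  have "sum_list (map (\<lambda>(a,j,k). \<bar>a\<bar> * \<bar>k\<bar>^(n-j) * int n^j) ys) * B^N
      = sum_list (map (\<lambda>(a,j,k). \<bar>a\<bar> * (\<bar>k\<bar>^(n-j) * int n^j * B^N)) ys)"
    by (subst sl_mult) (simp add: case_prod_unfold mult_ac)
  also have "\<dots> \<le> sum_list (map (\<lambda>(a,j,k). \<bar>a\<bar> * (\<bar>k\<bar>^(N-j) * int N^j * B^n)) ys)"
    apply (rule sum_list_mono_int)
    using conds growth[OF _ N _ nN] by (auto intro!: mult_left_mono)
  also have "\<dots> = sum_list (map (\<lambda>(a,j,k). \<bar>a\<bar> * \<bar>k\<bar>^(N-j) * int N^j) ys) * B^n"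
    by (subst sl_mult) (simp add: case_prod_unfold mult_ac)
  also have "\<dots> \<le> B^N * B^n" using S B by (intro mult_right_mono) auto
  finally have "sum_list (map (\<lambda>(a,j,k). \<bar>a\<bar> * \<bar>k\<bar>^(n-j) * int n^j) ys) \<le> B^n"
    using B by (simp add: mult.commute)
  with abs_epi_le[of ys n] have "\<bar>epi ys n\<bar> \<le> B^n" by linarith
  thus ?thesis using main by (simp add: epi_append)
qed


lemma ep_Nil[simp]: "ep [] t = 0" by (simp add: ep_def)
lemma ep_Cons[simp]: "ep ((a,j,k)#xs) t = of_int a * t^j * exp (of_int k * t) + ep xs t" by (simp add: ep_def)
lemma ep_app[simp]: "ep (xs @ ys) t = ep xs t + ep ys t" by (simp add: ep_def)

definition smul :: "int \<Rightarrow> (int \<times> nat \<times> int) list \<Rightarrow> (int \<times> nat \<times> int) list" where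
  "smul c xs = map (\<lambda>(a,j,k). (c*a,j,k)) xs"
lemma ep_smul[simp]: "ep (smul c xs) t = of_int c * ep xs t"
  by (induction xs) (auto simp: smul_def algebra_simps)

definition mulT :: "(int \<times> nat \<times> int) \<Rightarrow> (int \<times> nat \<times> int) list \<Rightarrow> (int \<times> nat \<times> int) list" where
  "mulT x ys = (case x of (a,j,k) \<Rightarrow> map (\<lambda>(b,i,l). (a*b, j+i, k+l)) ys)"
lemma ep_mulT[simp]: "ep (mulT (a,j,k) ys) t = of_int a * t^j * exp (of_int k * t) * ep ys t"
  by (induction ys) (auto simp: mulT_def algebra_simps power_add exp_add)

definition mulL :: "(int \<times> nat \<times> int) list \<Rightarrow> (int \<times> nat \<times> int) list \<Rightarrow> (int \<times> nat \<times> int) list" where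
  "mulL xs ys = concat (map (\<lambda>x. mulT x ys) xs)"
lemma ep_mulL[simp]: "ep (mulL xs ys) t = ep xs t * ep ys t"
proof (induction xs)
  case Nil then show ?case by (simp add: mulL_def)
next
  case (Cons x xs) then show ?case by (cases x) (simp add: mulL_def algebra_simps)
qed

fun ins :: "(int \<times> nat \<times> int) \<Rightarrow> (int \<times> nat \<times> int) list \<Rightarrow> (int \<times> nat \<times> int) list" where
  "ins x [] = [x]"
| "ins (a,j,k) ((b,i,l)#r) = (if j = i \<and> k = l then (a+b,i,l)#r else (b,i,l) # ins (a,j,k) r)"
lemma ep_ins[simp]: "ep (ins (a,j,k) xs) t = of_int a * t^j * exp (of_int k * t) + ep xs t"
proof (induction xs)
  case Nil then show ?case by simp
next
  case (Cons y xs) then show ?case by (cases y) (auto simp: algebra_simps)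
qed

definition normL :: "(int \<times> nat \<times> int) list \<Rightarrow> (int \<times> nat \<times> int) list" where
  "normL xs = filter (\<lambda>(a,j,k). a \<noteq> 0) (foldr ins xs [])"
lemma ep_filter0: "ep (filter (\<lambda>(a,j,k). a \<noteq> 0) xs) t = ep xs t"
proof (induction xs)
  case Nil then show ?case by simp
next
  case (Cons y xs) then show ?case by (cases y) auto
qed
lemma ep_foldr_ins: "ep (foldr ins xs []) t = ep xs t"
proof (induction xs)
  case Nil then show ?case by simp
next
  case (Cons y xs) then show ?case by (cases y) auto
qed
lemma ep_norm[simp]: "ep (normL xs) t = ep xs t"
  by (simp add: normL_def ep_filter0 ep_foldr_ins)

fun powL :: "(int \<times> nat \<times> int) list \<Rightarrow> nat \<Rightarrow> (int \<times> nat \<times> int) list" where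
  "powL xs 0 = [(1,0,0)]"
| "powL xs (Suc n) = normL (mulL xs (powL xs n))"
lemma ep_powL[simp]: "ep (powL xs n) t = ep xs t ^ n"
  by (induction n) auto

lemma epi_filter_split: "epi xs n = epi (filter P xs) n + epi (filter (\<lambda>x. \<not> P x) xs) n"
  by (induction xs) (auto simp: epi_def)

lemma ep_S2: "ep [(1,0,1),(-1,0,-1)] t = 2 * sinh t"
  by (simp add: sinh_def exp_minus)
lemma ep_C2: "ep [(1,0,1),(1,0,-1)] t = 2 * cosh t"
  by (simp add: cosh_def exp_minus)
lemma ep_T: "ep [(1,1,0)] t = t"
  by simp



definition "S2 = [(1::int,0::nat,1::int),(-1,0,-1)]"
definition "C2 = [(1::int,0::nat,1::int),(1,0,-1)]"
definition "TT = [(1::int,1::nat,0::int)]"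
definition "Pbig = normL (mulL (powL (S2 @ smul (-2) TT) 5) (powL S2 3) @
   smul (-8) (mulL (powL TT 3) (powL (smul 2 TT @ mulL TT C2 @ smul (-2) S2) 5)))"

definition PF :: "real \<Rightarrow> real" where
  "PF t = (sinh t - t)^5 * sinh t^3 - t^3 * (t + t*cosh t - 2*sinh t)^5"

lemma Pbig_ep: "ep Pbig t = 256 * PF t"
proof -
  have "ep Pbig t = (2 * sinh t - 2*t)^5 * (2*sinh t)^3 - 8 * (t^3 * (2*t + t * (2*cosh t) - 2*(2*sinh t))^5)"
    unfolding Pbig_def by (simp add: ep_S2[folded S2_def] ep_C2[folded C2_def] TT_def) (simp add: algebra_simps)
  also have "\<dots> = 256 * PF t" unfolding PF_def by algebra
  finally show ?thesis .
qed

definition "Pm = (\<lambda>(a::int,j::nat,k::int). \<bar>k\<bar> = 8)"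

lemma Pmain: "filter Pm Pbig = [(1,0,8),(1,0,-8)]" by code_simp
lemma Pconds: "\<forall>(a,j,k)\<in>set (filter (\<lambda>x. \<not> Pm x) Pbig). j \<le> 48 \<and> (int 48 + 1)^j * \<bar>k\<bar> \<le> 8 * int 48^j"
  by code_simp
lemma PS: "sum_list (map (\<lambda>(a,j,k). \<bar>a\<bar> * \<bar>k\<bar>^(48-j) * int 48^j) (filter (\<lambda>x. \<not> Pm x) Pbig)) \<le> 8^48"
  by code_simp
lemma Pfin: "list_all (\<lambda>n. 0 \<le> epi Pbig (2*n)) [0..<24]" by code_simp
lemma P22: "epi Pbig 22 > 0" by code_simp

lemma Pbig_nonneg: assumes "even n" shows "epi Pbig n \<ge> 0"
proof (cases "n < 48")
  case True
  then obtain m where "n = 2*m" "m < 24" using assms by auto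
  then show ?thesis using Pfin by (auto simp: list_all_iff)
next
  case False
  have main: "epi (filter Pm Pbig) n \<ge> 8^n"
    unfolding Pmain using assms by (simp add: epi_def)
  have "epi (filter Pm Pbig @ filter (\<lambda>x. \<not> Pm x) Pbig) n \<ge> 0"
    by (rule epi_asym[OF Pconds PS _ _ _ main]) (use False in auto)
  thus ?thesis by (simp add: epi_append epi_filter_split[of Pbig n Pm])
qed

lemma PF_even: "PF (-t) = PF t"
proof -
  have a: "sinh(-t) - (-t) = -(sinh t - t)" by simp
  have b: "(-t) + (-t)*cosh(-t) - 2*sinh(-t) = -(t + t*cosh t - 2*sinh t)" by simp
  have g: "\<And>u v w z::real. (-u)^5 * (-v)^3 - (-w)^3 * (-z)^5 = u^5 * v^3 - w^3 * z^5"
    by (simp add: power_minus_odd)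
  have "PF (-t) = (-(sinh t - t))^5 * (-sinh t)^3 - (-t)^3 * (-(t + t*cosh t - 2*sinh t))^5"
    unfolding PF_def a[symmetric] b[symmetric] by simp
  also have "\<dots> = PF t" unfolding g PF_def ..
  finally show ?thesis .
qed

lemma PF_pos: assumes "t \<noteq> 0" shows "PF t > 0"
proof -
  have "ep Pbig t + ep Pbig (-t) > 0"
    by (rule ep_even_pos[OF Pbig_nonneg _ P22 assms]) auto
  thus ?thesis by (simp add: Pbig_ep PF_even)
qed



definition "Hbig = normL (mulL TT (powL S2 3) @ smul (-4) (mulL (powL TT 4) C2))"

lemma Hbig_ep: "ep Hbig t = 8 * (t * sinh t ^ 3 - t^4 * cosh t)"
proof -
  have "ep Hbig t = t * (2*sinh t)^3 - 4 * (t^4 * (2 * cosh t))"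
    unfolding Hbig_def by (simp add: ep_S2[folded S2_def] ep_C2[folded C2_def] TT_def)
  also have "\<dots> = 8 * (t * sinh t ^ 3 - t^4 * cosh t)" by algebra
  finally show ?thesis .
qed

definition "Hm = (\<lambda>(a::int,j::nat,k::int). \<bar>k\<bar> = 3)"

lemma Hmain: "set (filter Hm Hbig) = {(1,1,3),(-1,1,-3)} \<and> length (filter Hm Hbig) = 2" by code_simp
lemma Hconds: "\<forall>(a,j,k)\<in>set (filter (\<lambda>x. \<not> Hm x) Hbig). j \<le> 12 \<and> (int 12 + 1)^j * \<bar>k\<bar> \<le> 3 * int 12^j"
  by code_simp
lemma HS: "sum_list (map (\<lambda>(a,j,k). \<bar>a\<bar> * \<bar>k\<bar>^(12-j) * int 12^j) (filter (\<lambda>x. \<not> Hm x) Hbig)) \<le> 3^12"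
  by code_simp
lemma Hfin: "list_all (\<lambda>n. 0 \<le> epi Hbig (2*n)) [0..<6]" by code_simp
lemma H8: "epi Hbig 8 > 0" by code_simp

lemma Hmain_eq: "filter Hm Hbig = [(1,1,3),(-1,1,-3)] \<or> filter Hm Hbig = [(-1,1,-3),(1,1,3)]"
  by code_simp

lemma Hbig_nonneg: assumes "even n" shows "epi Hbig n \<ge> 0"
proof (cases "n < 12")
  case True
  then obtain m where "n = 2*m" "m < 6" using assms by auto
  then show ?thesis using Hfin by (auto simp: list_all_iff)
next
  case False
  then obtain m where m: "n = Suc m" by (cases n) auto
  have om: "odd m" using assms m by simp
  have e: "epi [(1,1,3),(-1,1,-3)] n = 2 * int n * 3^m"
    using False om by (simp add: epi_def m power_minus_odd) 
  have "(3::int)^n \<le> 2 * int n * 3^m" using False by (simp add: m)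
  hence main: "epi (filter Hm Hbig) n \<ge> 3^n"
    using Hmain_eq e by (auto simp: epi_def)
  have "epi (filter Hm Hbig @ filter (\<lambda>x. \<not> Hm x) Hbig) n \<ge> 0"
    by (rule epi_asym[OF Hconds HS _ _ _ main]) (use False in auto)
  thus ?thesis by (simp add: epi_append epi_filter_split[of Hbig n Hm])
qed

lemma lazarevic: fixes x :: real assumes "x > 0" shows "sinh x ^ 3 > x^3 * cosh x"
proof -
  have "ep Hbig x + ep Hbig (-x) > 0"
    by (rule ep_even_pos[OF Hbig_nonneg _ H8]) (use assms in auto)
  hence "x * sinh x ^ 3 - x^4 * cosh x > 0" by (simp add: Hbig_ep mult.commute)
  moreover have "x * (sinh x ^ 3 - x^3 * cosh x) = x * sinh x ^ 3 - x^4 * cosh x"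
    by (simp add: algebra_simps eval_nat_numeral)
  ultimately have "x * (sinh x ^ 3 - x^3 * cosh x) > 0" by simp
  thus ?thesis using assms by (simp add: zero_less_mult_iff)
qed


lemma key_ineq: fixes x :: real assumes "x > 0"
  shows "(sinh x * cosh x - x)^5 * sinh x^3 > 32 * x^3 * cosh x^2 * (x*cosh x - sinh x)^5"
proof -
  define s where "s = sinh x"
  define c where "c = cosh x"
  have c: "c > 0" by (simp add: c_def)
  have "PF (2*x) > 0" using PF_pos[of "2*x"] assms by simp
  moreover have "PF (2*x) = 256 * c^3 * ((s*c - x)^5 * s^3 - 32 * x^3 * c^2 * (x*c - s)^5)"
    unfolding PF_def sinh_double cosh_double_cosh s_def[symmetric] c_def[symmetric] by algebra
  ultimately have "(s*c - x)^5 * s^3 - 32 * x^3 * c^2 * (x*c - s)^5 > 0"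
    using c by (simp add: zero_less_mult_iff)
  thus ?thesis by (simp add: s_def c_def)
qed


lemma sinh_gt_self: fixes x :: real assumes "x > 0" shows "sinh x > x"
proof -
  have "(\<lambda>y. sinh y - y) 0 < (\<lambda>y. sinh y - y) x"
  proof (rule DERIV_pos_imp_increasing_open[OF assms])
    fix y :: real assume "0 < y" "y < x"
    show "\<exists>d. ((\<lambda>y. sinh y - y) has_real_derivative d) (at y) \<and> d > 0"
    proof -
      have "cosh y \<noteq> 1" using \<open>0 < y\<close> by simp
      hence "cosh y > 1" using cosh_real_ge_1[of y] by linarith
      thus ?thesis by (intro exI[of _ "cosh y - 1"]) (auto intro!: derivative_eq_intros)
    qed
  qed (auto intro!: continuous_intros)
  thus ?thesis by simp
qed

lemma xcosh_gt_sinh: fixes x :: real assumes "x > 0" shows "x * cosh x > sinh x"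
proof -
  have "(\<lambda>y. y * cosh y - sinh y) 0 < (\<lambda>y. y * cosh y - sinh y) x"
  proof (rule DERIV_pos_imp_increasing_open[OF assms])
    fix y :: real assume "0 < y" "y < x"
    show "\<exists>d. ((\<lambda>y. y * cosh y - sinh y) has_real_derivative d) (at y) \<and> d > 0"
      by (rule exI[of _ "y * sinh y"]) (use \<open>0 < y\<close> in \<open>auto intro!: derivative_eq_intros\<close>)
  qed (auto intro!: continuous_intros)
  thus ?thesis by simp
qed

lemma sinhcosh_gt: fixes x :: real assumes "x > 0" shows "sinh x * cosh x > x"
  using sinh_gt_self[of "2*x"] assms by (simp add: sinh_double)

lemma exp_convex_ineq: fixes l y :: real assumes "0 \<le> l" "l \<le> 1" shows "exp (l * y) \<le> l * exp y + (1 - l)"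
proof -
  define w where "w = exp (l*y)"
  have "l*y + (1-l)*y = y" by (simp add: algebra_simps)
  hence "exp y = w * exp ((1-l)*y)" unfolding w_def by (metis exp_add)
  moreover have "exp ((1-l)*y) \<ge> 1 + (1-l)*y" by simp
  ultimately have 1: "exp y \<ge> w * (1 + (1-l)*y)" by (simp add: w_def)
  have "1 = w * exp (-(l*y))" by (simp add: w_def flip: exp_add)
  moreover have "exp (-(l*y)) \<ge> 1 - l*y" using exp_ge_add_one_self[of "-(l*y)"] by simp
  ultimately have 2: "1 \<ge> w * (1 - l*y)" by (metis mult_left_mono w_def exp_ge_zero)
  have "l * exp y + (1 - l) * 1 \<ge> l * (w * (1 + (1-l)*y)) + (1-l) * (w * (1 - l*y))"
    using 1 2 assms by (intro add_mono mult_left_mono) auto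
  also have "l * (w * (1 + (1-l)*y)) + (1-l) * (w * (1 - l*y)) = w" by (simp add: algebra_simps)
  finally show ?thesis by (simp add: w_def)
qed

definition GG :: "real \<Rightarrow> real" where
  "GG y = exp (-(6/5) * ln (sinh y / y)) + exp (-(3/5) * ln (tanh y / y))"

lemma GG_deriv:
  assumes y: "y > 0"
  shows "(GG has_real_derivative
     exp (-(6/5) * ln (sinh y / y)) * (-(6/5) * ((y*cosh y - sinh y)/(y*sinh y))) +
     exp (-(3/5) * ln (tanh y / y)) * (-(3/5) * ((y - sinh y * cosh y)/(y*sinh y*cosh y)))) (at y)"
proof -
  have s: "sinh y > 0" using y by simp
  have t: "tanh y > 0" using y by (simp add: tanh_def)
  have da: "((\<lambda>y. ln (sinh y / y)) has_real_derivative (y*cosh y - sinh y)/(y*sinh y)) (at y)"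
    using y s by (auto intro!: derivative_eq_intros simp: field_simps power2_eq_square)
  have db: "((\<lambda>y. ln (tanh y / y)) has_real_derivative (y - sinh y * cosh y)/(y*sinh y*cosh y)) (at y)"
  proof -
    have c: "cosh y > 0" by simp
    have cs: "cosh y ^2 - sinh y^2 = 1" by (simp add: cosh_square_eq)
    have "1 - (tanh y)^2 = (cosh y ^2 - sinh y^2)/(cosh y)^2"
      using c by (simp add: tanh_def power_divide field_simps)
    hence tt: "1 - (tanh y)^2 = 1/(cosh y)^2" unfolding cs .
    have "((1 - (tanh y)\<^sup>2) * y - tanh y) / (tanh y * y) = (y - sinh y * cosh y) / (y * sinh y * cosh y)"
      unfolding tt using y s c by (simp add: tanh_def field_simps power2_eq_square)
    thus ?thesis using y s t by (auto intro!: derivative_eq_intros)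
  qed
  show ?thesis unfolding GG_def
    by (intro derivative_intros DERIV_cmult da db)
qed


lemma exp5: fixes r z :: real shows "exp (r * z) ^ 5 = exp ((5*r) * z)"
  using exp_of_nat_mult[of 5 "r*z"] by (simp add: mult.assoc)

lemma GG_deriv_pos:
  fixes y :: real
  assumes y: "y > 0"
  shows "exp (-(6/5) * ln (sinh y / y)) * (-(6/5) * ((y*cosh y - sinh y)/(y*sinh y))) +
     exp (-(3/5) * ln (tanh y / y)) * (-(3/5) * ((y - sinh y * cosh y)/(y*sinh y*cosh y))) > 0"
proof -
  define s where "s = sinh y"
  define c where "c = cosh y"
  have s: "s > 0" using y by (simp add: s_def)
  have c: "c > 0" by (simp add: c_def)
  have A1: "y*c - s > 0" using xcosh_gt_sinh[OF y] by (simp add: s_def c_def)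
  have B1: "s*c - y > 0" using sinhcosh_gt[OF y] by (simp add: s_def c_def)
  define e1 where "e1 = exp (-(6/5) * ln (s / y))"
  define e2 where "e2 = exp (-(3/5) * ln (s / (c*y)))"
  have e1p: "e1 > 0" and e2p: "e2 > 0" by (simp_all add: e1_def e2_def)
  have "e1^5 = exp (-(6 * ln (s/y)))" unfolding e1_def exp5 by simp
  also have "\<dots> = inverse ((s/y)^6)" using s y
    by (simp add: exp_minus exp_of_nat_mult[of 6, simplified] exp_ln)
  finally have e15: "e1^5 = (y/s)^6" by (simp add: power_divide)
  have "e2^5 = exp (-(3 * ln (s/(c*y))))" unfolding e2_def exp5 by simp
  also have "\<dots> = inverse ((s/(c*y))^3)" using s y c
    by (simp add: exp_minus exp_of_nat_mult[of 3, simplified] exp_ln)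
  finally have e25: "e2^5 = (c*y/s)^3" by (simp add: power_divide)
  have key: "(s*c - y)^5 * s^3 > 32 * y^3 * c^2 * (y*c - s)^5"
    using key_ineq[OF y] by (simp add: s_def c_def mult_ac)
  have pos: "y^3 * c^3 / s^6 > 0" using s y c by simp
  have "(32 * y^3 * c^2 * (y*c - s)^5) * (y^3 * c^3 / s^6) < ((s*c - y)^5 * s^3) * (y^3 * c^3 / s^6)"
    using mult_strict_right_mono[OF key pos] .
  moreover have "(32 * y^3 * c^2 * (y*c - s)^5) * (y^3 * c^3 / s^6) = (2*c*e1*(y*c - s))^5"
  proof -
    have "(2*c*e1*(y*c - s))^5 = 32 * c^5 * e1^5 * (y*c-s)^5" by (simp add: power_mult_distrib)
    also have "\<dots> = 32 * c^5 * (y^6/s^6) * (y*c-s)^5" by (simp add: e15 power_divide)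
    finally show ?thesis using s by (simp add: field_simps)
  qed
  moreover have "((s*c - y)^5 * s^3) * (y^3 * c^3 / s^6) = (e2*(s*c - y))^5"
  proof -
    have "(e2*(s*c - y))^5 = e2^5 * (s*c - y)^5" by (simp add: power_mult_distrib)
    also have "\<dots> = (c^3*y^3/s^3) * (s*c - y)^5" by (simp add: e25 power_divide power_mult_distrib)
    also have "\<dots> = ((s*c - y)^5 * s^3) * (y^3 * c^3 / s^6)" using s by (simp add: field_simps)
    finally show ?thesis by simp
  qed
  ultimately have "(2*c*e1*(y*c - s))^5 < (e2*(s*c - y))^5" by simp
  hence main: "2*c*e1*(y*c - s) < e2*(s*c - y)"
    by (rule power_less_imp_less_base) (use e2p B1 in simp)
  have "(6/5) * e1 * ((y*c - s)/(y*s)) = (3/5) * (2*c*e1*(y*c - s)) / (y*s*c)"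
    using s c y by (simp add: field_simps)
  also have "\<dots> < (3/5) * (e2*(s*c - y)) / (y*s*c)"
    using main s c y by (intro divide_strict_right_mono mult_strict_left_mono) auto
  finally have ineq: "(6/5) * e1 * ((y*c - s)/(y*s)) < (3/5) * e2 * ((s*c - y)/(y*s*c))" by simp
  have "tanh y / y = s/(c*y)" by (simp add: tanh_def s_def c_def)
  hence eq1: "exp (-(3/5) * ln (tanh y / y)) = e2" by (simp add: e2_def)
  have eq2: "exp (-(6/5) * ln (sinh y / y)) = e1" by (simp add: e1_def s_def)
  have eq3: "(y - s*c)/(y*s*c) = -((s*c - y)/(y*s*c))" by (simp add: minus_divide_left)
  have "exp (-(6/5) * ln (sinh y / y)) * (-(6/5) * ((y*cosh y - sinh y)/(y*sinh y))) +
     exp (-(3/5) * ln (tanh y / y)) * (-(3/5) * ((y - sinh y * cosh y)/(y*sinh y*cosh y)))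
     = e1 * (-(6/5) * ((y*c - s)/(y*s))) + e2 * (-(3/5) * ((y - s*c)/(y*s*c)))"
    unfolding eq1 eq2 s_def c_def ..
  also have "\<dots> = (3/5) * e2 * ((s*c - y)/(y*s*c)) - (6/5) * e1 * ((y*c - s)/(y*s))"
    unfolding eq3 by (simp add: algebra_simps)
  finally have "exp (-(6/5) * ln (sinh y / y)) * (-(6/5) * ((y*cosh y - sinh y)/(y*sinh y))) +
     exp (-(3/5) * ln (tanh y / y)) * (-(3/5) * ((y - sinh y * cosh y)/(y*sinh y*cosh y)))
     = (3/5) * e2 * ((s*c - y)/(y*s*c)) - (6/5) * e1 * ((y*c - s)/(y*s))" .
  with ineq show ?thesis by linarith
qed

lemma GG_mono: assumes "0 < a" "a < b" shows "GG a < GG b"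
  using assms(2)
proof (rule DERIV_pos_imp_increasing)
  fix x assume "a \<le> x" "x \<le> b"
  hence x: "x > 0" using assms by simp
  show "\<exists>y. (GG has_real_derivative y) (at x) \<and> 0 < y"
    using GG_deriv[OF x] GG_deriv_pos[OF x] by blast
qed

lemma GG_lim: "(GG \<longlongrightarrow> 2) (at_right 0)"
  unfolding GG_def by real_asymp

lemma GG_gt2: assumes "x > 0" shows "GG x > 2"
proof -
  have "2 \<le> GG (x/2)"
  proof (rule tendsto_upperbound[OF GG_lim])
    show "\<forall>\<^sub>F i in at_right 0. GG i \<le> GG (x/2)"
      unfolding eventually_at_right_field
      by (rule exI[of _ "x/2"]) (use assms in \<open>auto intro!: less_imp_le[OF GG_mono]\<close>)
  qed simp
  also have "\<dots> < GG x" using assms by (intro GG_mono) auto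
  finally show ?thesis .
qed


lemma Lim1: "((\<lambda>x::real. (2*ln(sinh x/x) + ln(tanh x/x))/x^4) \<longlongrightarrow> 1/15) (at_right 0)"
  by real_asymp
lemma Lim2: "((\<lambda>x::real. ln(sinh x/x)/x^2) \<longlongrightarrow> 1/6) (at_right 0)"
  by real_asymp
lemma Lim3: "((\<lambda>x::real. ln(tanh x/x)/x^2) \<longlongrightarrow> -1/3) (at_right 0)"
  by real_asymp
lemma Lim4: "((\<lambda>x::real. ln(sinh x/x)) \<longlongrightarrow> 0) (at_right 0)"
  by real_asymp
lemma Lim5: "((\<lambda>x::real. ln(tanh x/x)) \<longlongrightarrow> 0) (at_right 0)"
  by real_asymp
lemma LimE: "((\<lambda>y::real. (exp y - 1 - y)/y^2) \<longlongrightarrow> 1/2) (at 0)"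
proof -
  have "((\<lambda>y::real. (exp y - 1 - y)/y^2) \<longlongrightarrow> 1/2) (at_left 0)" by real_asymp
  moreover have "((\<lambda>y::real. (exp y - 1 - y)/y^2) \<longlongrightarrow> 1/2) (at_right 0)" by real_asymp
  ultimately show ?thesis by (rule filterlim_split_at)
qed


lemma sinh_div_gt1: fixes x :: real assumes "x > 0" shows "sinh x / x > 1"
  using sinh_gt_self[OF assms] assms by simp
lemma tanh_div_pos: fixes x :: real assumes "x > 0" shows "tanh x / x > 0"
  using assms by (simp add: tanh_def)
lemma tanh_div_lt1: fixes x :: real assumes "x > 0" shows "tanh x / x < 1"
proof -
  have h: "sinh x < x * cosh x" using xcosh_gt_sinh[OF assms] by simp
  have "tanh x / x = sinh x / (x * cosh x)" by (simp add: tanh_def)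
  also have "\<dots> < 1" using h assms by (simp add: divide_less_eq)
  finally show ?thesis .
qed

lemma exp_E: fixes u :: real assumes "u \<noteq> 0" shows "exp u = 1 + u + (exp u - 1 - u)/u^2 * u^2"
  using assms by simp

lemma not_all:
  fixes p :: real
  assumes p: "-3/5 < p" "p < 0"
  shows "\<exists>x>0. (sinh x / x) powr (2*p) + (tanh x / x) powr p < 2"
proof -
  define al where "al = (\<lambda>x::real. ln(sinh x/x))"
  define be where "be = (\<lambda>x::real. ln(tanh x/x))"
  define E where "E = (\<lambda>y::real. (exp y - 1 - y)/y^2)"
  have alpos: "x > 0 \<Longrightarrow> al x > 0" for x using sinh_div_gt1[of x] by (simp add: al_def)
  have beneg: "x > 0 \<Longrightarrow> be x < 0" for x using tanh_div_lt1[of x] tanh_div_pos[of x] by (simp add: be_def)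
  have ev0: "\<forall>\<^sub>F x in at_right (0::real). x > 0" by (rule eventually_at_right_less)
  have ua: "filterlim (\<lambda>x. 2*p*al x) (at 0) (at_right 0)"
  proof (rule filterlim_atI)
    show "((\<lambda>x. 2*p*al x) \<longlongrightarrow> 0) (at_right 0)"
      using tendsto_mult[OF tendsto_const Lim4, of "2*p"] by (simp add: al_def)
    show "\<forall>\<^sub>F x in at_right 0. 2*p*al x \<noteq> 0"
      using ev0 by eventually_elim (use p in \<open>auto dest: alpos\<close>)
  qed
  have va: "filterlim (\<lambda>x. p*be x) (at 0) (at_right 0)"
  proof (rule filterlim_atI)
    show "((\<lambda>x. p*be x) \<longlongrightarrow> 0) (at_right 0)"
      using tendsto_mult[OF tendsto_const Lim5, of "p"] by (simp add: be_def)
    show "\<forall>\<^sub>F x in at_right 0. p*be x \<noteq> 0"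
      using ev0 by eventually_elim (use p in \<open>auto dest: beneg\<close>)
  qed
  have E1: "((\<lambda>x. E (2*p*al x)) \<longlongrightarrow> 1/2) (at_right 0)"
    using filterlim_compose[OF LimE ua] by (simp add: E_def o_def)
  have E2: "((\<lambda>x. E (p*be x)) \<longlongrightarrow> 1/2) (at_right 0)"
    using filterlim_compose[OF LimE va] by (simp add: E_def o_def)
  define Q where "Q = (\<lambda>x. p*((2*al x + be x)/x^4) + E(2*p*al x)*(4*p^2)*(al x/x^2)^2 + E(p*be x)*p^2*(be x/x^2)^2)"
  have "(Q \<longlongrightarrow> p*(1/15) + 1/2*(4*p^2)*(1/6)^2 + 1/2*p^2*(-1/3)^2) (at_right 0)"
    unfolding Q_def al_def be_def
    by (intro tendsto_intros Lim1 Lim2 Lim3 E1[unfolded al_def] E2[unfolded be_def])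
  moreover have "p*(1/15) + 1/2*(4*p^2)*(1/6)^2 + 1/2*p^2*(-1/3)^2 = p*(3+5*p)/45"
    by (simp add: power2_eq_square field_simps)
  moreover have "p*(3+5*p)/45 < 0" using p by (simp add: mult_neg_pos)
  ultimately have "\<forall>\<^sub>F x in at_right 0. Q x < 0" by (metis order_tendstoD(2))
  hence "\<forall>\<^sub>F x in at_right 0. (sinh x / x) powr (2*p) + (tanh x / x) powr p < 2"
    using ev0
  proof eventually_elim
    case (elim x)
    have a0: "2*p*al x \<noteq> 0" using alpos[OF elim(2)] p by auto
    have b0: "p*be x \<noteq> 0" using beneg[OF elim(2)] p by auto
    have s0: "sinh x / x \<noteq> 0" and t0: "tanh x / x \<noteq> 0"
      using sinh_div_gt1[OF elim(2)] tanh_div_pos[OF elim(2)] by auto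
    have f: "(sinh x / x) powr (2*p) + (tanh x / x) powr p = exp (2*p*al x) + exp (p*be x)"
      using s0 t0 by (simp add: powr_def al_def be_def mult_ac)
    have x4: "x^4 > 0" using elim(2) by simp
    have eu: "E (2*p*al x) * (2*p*al x)^2 = exp(2*p*al x) - 1 - 2*p*al x" using a0 by (simp add: E_def)
    have ev: "E (p*be x) * (p*be x)^2 = exp(p*be x) - 1 - p*be x" using b0 by (simp add: E_def)
    have xq: "x^4 * Q x = p*(2*al x + be x) + E(2*p*al x)*(2*p*al x)^2 + E(p*be x)*(p*be x)^2"
      unfolding Q_def using elim(2) by (simp add: field_simps eval_nat_numeral)
    have "exp (2*p*al x) + exp (p*be x) = 2 + x^4 * Q x"
      unfolding xq eu ev by (simp add: algebra_simps)
    moreover have "x^4 * Q x < 0" using x4 elim(1) by (simp add: mult_pos_neg)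
    ultimately show ?case using f by simp
  qed
  then obtain b where b: "b > 0" "\<And>y. y > 0 \<Longrightarrow> y < b \<Longrightarrow> (sinh y / y) powr (2*p) + (tanh y / y) powr p < 2"
    unfolding eventually_at_right_field by auto
  show ?thesis using b(2)[of "b/2"] b(1) by (intro exI[of _ "b/2"]) auto
qed


theorem proposition4p7:
  fixes p :: real
  assumes "p \<noteq> 0"
  shows "(\<forall>x::real. x > 0 \<longrightarrow>
            (sinh x / x) powr (2 * p) + (tanh x / x) powr p > 2)
         \<longleftrightarrow> (p > 0 \<or> p \<le> -3/5)"
proof
  assume H: "\<forall>x::real. x > 0 \<longrightarrow> (sinh x / x) powr (2 * p) + (tanh x / x) powr p > 2"
  show "p > 0 \<or> p \<le> -3/5"
  proof (rule ccontr)
    assume "\<not> (p > 0 \<or> p \<le> -3/5)"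
    hence "-3/5 < p" "p < 0" using assms by auto
    then obtain x where "x > 0" "(sinh x / x) powr (2*p) + (tanh x / x) powr p < 2"
      using not_all by blast
    with H show False by force
  qed
next
  assume "p > 0 \<or> p \<le> -3/5"
  thus "\<forall>x::real. x > 0 \<longrightarrow> (sinh x / x) powr (2 * p) + (tanh x / x) powr p > 2"
  proof
    assume p: "p > 0"
    show ?thesis
    proof (intro allI impI)
      fix x :: real assume x: "x > 0"
      have laz: "sinh x ^ 3 > x^3 * cosh x" by (rule lazarevic[OF x])
      have t: "tanh x / x > 0" by (rule tanh_div_pos[OF x])
      have s: "sinh x / x > 0" using sinh_div_gt1[OF x] by simp
      have sp: "sinh x > 0" using x by simp
      have q: "x / tanh x < (sinh x / x)^2"
      proof -
        have "x / tanh x = x * cosh x / sinh x" by (simp add: tanh_def)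
        also have "\<dots> = (x^3 * cosh x) / (x^2 * sinh x)" using x by (simp add: field_simps eval_nat_numeral)
        also have "\<dots> < sinh x ^ 3 / (x^2 * sinh x)" using laz x sp by (intro divide_strict_right_mono) auto
        also have "\<dots> = (sinh x / x)^2" using sp x by (simp add: field_simps eval_nat_numeral)
        finally show ?thesis .
      qed
      define w where "w = (tanh x / x) powr p"
      have w: "w > 0" using t x by (simp add: w_def)
      have "(sinh x / x) powr (2*p) = ((sinh x / x) powr 2) powr p" by (simp add: powr_powr)
      also have "\<dots> = ((sinh x / x)^2) powr p" using s by (simp add: powr_numeral)
      finally have e1: "(sinh x / x) powr (2*p) = ((sinh x / x)^2) powr p" .
      have tx: "tanh x > 0" using t x by (simp add: zero_less_divide_iff)
      have "(x / tanh x) powr p * w = 1"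
        using powr_mult[of "x / tanh x" "tanh x / x" p] x tx unfolding w_def by simp
      hence e2: "(x / tanh x) powr p = 1 / w" using w by (simp add: field_simps)
      have "1 / w < (sinh x / x) powr (2*p)"
        unfolding e1 e2[symmetric] using q p x tx by (intro powr_less_mono2) auto
      moreover have "1 / w + w \<ge> 2"
      proof -
        have "(w - 1)^2 \<ge> 0" by simp
        hence "w^2 + 1 \<ge> 2 * w" by (simp add: power2_eq_square algebra_simps)
        thus ?thesis using w by (simp add: field_simps power2_eq_square)
      qed
      ultimately show "(sinh x / x) powr (2 * p) + (tanh x / x) powr p > 2"
        unfolding w_def by linarith
    qed
  next
    assume p: "p \<le> -3/5"
    show ?thesis
    proof (intro allI impI)
      fix x :: real assume x: "x > 0"
      define al where "al = ln (sinh x / x)"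
      define be where "be = ln (tanh x / x)"
      have s0: "sinh x / x \<noteq> 0" using sinh_div_gt1[OF x] by auto
      have t0: "tanh x / x \<noteq> 0" using tanh_div_pos[OF x] x by auto
      have f: "(sinh x / x) powr (2 * p) + (tanh x / x) powr p = exp (2*p*al) + exp (p*be)"
        using s0 t0 by (simp add: powr_def al_def be_def mult_ac)
      define l where "l = (-3/5) / p"
      have p0: "p < 0" using p by simp
      have l0: "0 < l" using p0 by (simp add: l_def divide_neg_neg)
      have l1: "l \<le> 1" unfolding l_def using p p0 by (subst divide_le_eq_1_neg) auto
      have "GG x = exp (l * (2*p*al)) + exp (l * (p*be))"
        unfolding GG_def al_def be_def l_def using p0 by (simp add: field_simps)
      also have "\<dots> \<le> (l * exp (2*p*al) + (1 - l)) + (l * exp (p*be) + (1 - l))"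
        using l0 l1 by (intro add_mono exp_convex_ineq) auto
      finally have "GG x \<le> l * (exp (2*p*al) + exp (p*be)) + 2 * (1 - l)" by (simp add: algebra_simps)
      moreover have "GG x > 2" by (rule GG_gt2[OF x])
      ultimately have "l * (exp (2*p*al) + exp (p*be)) > l * 2" by (simp add: algebra_simps)
      hence "exp (2*p*al) + exp (p*be) > 2" using l0 by simp
      thus "(sinh x / x) powr (2 * p) + (tanh x / x) powr p > 2" using f by simp
    qed
  qed
qed

end
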